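(* Let $d\ge1$, $\lambda>0$, $\delta>0$, and let $f:\mathbb{R}^d\to\mathbb{R}$ be continuous and bounded below. Then for any compact set $K\subset\mathbb{R}^d$ and any $\varepsilon>0$ there exists $C_{K,\varepsilon}>0$ such that for every $x\in K$ and every $N\ge1$, \[\mathbb{E}\Big[\big\|\widehat{\operatorname{zprox}}^{\delta,N}_{\lambda,f}(x)-\operatorname{zprox}^\delta_{\lambda,f}(x)\big\|^2\mathbf 1_{\Omega_{x,\varepsilon}}\Big]\le\frac{C_{K,\varepsilon}}{N},\] where $\Omega_{x,\varepsilon}=\{\frac1N\sum_{i=1}^N\exp(-f(y_i)/\delta)\ge\varepsilon\}$ and $(y_i)_{i=1}^N$ are the i.i.d. samples from $\mathcal N(x,\lambda\delta I)$ generating $\widehat{\operatorname{zprox}}^{\delta,N}_{\lambda,f}(x)$.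
   Context: $\operatorname{zprox}^\delta_{\lambda,f}(x)=\dfrac{\mathbb{E}_{y\sim\mathcal N(x,\lambda\delta I)}[y\exp(-f(y)/\delta)]}{\mathbb{E}_{y\sim\mathcal N(x,\lambda\delta I)}[\exp(-f(y)/\delta)]}$. The sampled estimator is $\widehat{\operatorname{zprox}}^{\delta,N}_{\lambda,f}(x)=\dfrac{\sum_{i=1}^Ny_i\exp(-f(y_i)/\delta)}{\sum_{i=1}^N\exp(-f(y_i)/\delta)}$ with $y_1,\dots,y_N$ i.i.d. from $\mathcal N(x,\lambda\delta I)$. *)

theory Defs
  imports "HOL-Probability.Probability"
begin

definition gauss :: "'a::euclidean_space \<Rightarrow> real \<Rightarrow> 'a measure" where
  "gauss x s = density lborel
     (\<lambda>y. ennreal ((2 * pi * s) powr (- real DIM('a) / 2) * exp (- (norm (y - x))\<^sup>2 / (2 * s))))"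

definition zprox :: "real \<Rightarrow> real \<Rightarrow> ('a::euclidean_space \<Rightarrow> real) \<Rightarrow> 'a \<Rightarrow> 'a" where
  "zprox delta lam f x =
     (\<integral>y. exp (- f y / delta) *\<^sub>R y \<partial>gauss x (lam * delta)) /\<^sub>R
     (\<integral>y. exp (- f y / delta) \<partial>gauss x (lam * delta))"

definition zprox_hat :: "real \<Rightarrow> ('a::euclidean_space \<Rightarrow> real) \<Rightarrow> nat \<Rightarrow> (nat \<Rightarrow> 'a) \<Rightarrow> 'a" where
  "zprox_hat delta f N y =
     (\<Sum>i<N. exp (- f (y i) / delta) *\<^sub>R y i) /\<^sub>R (\<Sum>i<N. exp (- f (y i) / delta))"

definition samples :: "real \<Rightarrow> real \<Rightarrow> 'a::euclidean_space \<Rightarrow> nat \<Rightarrow> (nat \<Rightarrow> 'a) measure" where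
  "samples delta lam x N = PiM {..<N} (\<lambda>_. gauss x (lam * delta))"

definition Omega_ev :: "real \<Rightarrow> ('a::euclidean_space \<Rightarrow> real) \<Rightarrow> nat \<Rightarrow> real \<Rightarrow> (nat \<Rightarrow> 'a) set" where
  "Omega_ev delta f N eps = {y. (1 / real N) * (\<Sum>i<N. exp (- f (y i) / delta)) \<ge> eps}"

end

theory Submission
  imports Defs
begin


lemma gauss1d:
  fixes s :: real assumes s: "s > 0"
  shows "(\<integral>\<^sup>+ t. ennreal (exp (-(t^2)/(2 * s))) \<partial>lborel) = ennreal (sqrt (2 * pi * s))"
proof -
  have "(\<integral>\<^sup>+ t. ennreal (normal_density 0 (sqrt s) t) \<partial>lborel) = 1"
    using s by (subst nn_integral_eq_integral) (auto simp: normal_density_nonneg)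
  moreover have "\<And>t. ennreal (exp (-(t^2)/(2 * s))) = ennreal (sqrt (2 * pi * s))  *  ennreal (normal_density 0 (sqrt s) t)"
    using s by (simp add: normal_density_def ennreal_mult[symmetric] real_sqrt_mult)
  ultimately show ?thesis
    by (simp add: nn_integral_cmult)
qed

lemma gauss_nd0:
  fixes s :: real assumes s: "s > 0"
  shows "(\<integral>\<^sup>+ y. ennreal (exp (-(norm (y::'a::euclidean_space))\<^sup>2/(2 * s))) \<partial>lborel)
    = ennreal ((2 * pi * s) powr (real DIM('a) / 2))"
proof -
  have eq: "ennreal (exp (-(norm y)\<^sup>2/(2 * s))) = (\<Prod>b\<in>Basis. ennreal (exp (-((y \<bullet> b)^2)/(2 * s))))" for y :: 'a
  proof -
    have "(norm y)\<^sup>2 = (\<Sum>b\<in>Basis. (y \<bullet> b)^2)"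
      unfolding power2_norm_eq_inner by (subst euclidean_inner) (simp add: power2_eq_square)
    then have "exp (-(norm y)\<^sup>2/(2 * s)) = (\<Prod>b\<in>Basis. exp (-((y \<bullet> b)^2)/(2 * s)))"
      by (simp add: exp_sum[symmetric] sum_divide_distrib[symmetric] sum_negf)
    then show ?thesis by (simp add: prod_ennreal)
  qed
  have "(\<integral>\<^sup>+ y. ennreal (exp (-(norm (y::'a))\<^sup>2/(2 * s))) \<partial>lborel)
     = (\<Prod>b\<in>(Basis::'a set). (\<integral>\<^sup>+ t. ennreal (exp (-(t^2)/(2 * s))) \<partial>lborel))"
    unfolding eq by (rule nn_integral_lborel_prod) auto
  also have "\<dots> = ennreal (sqrt (2 * pi * s)) ^ DIM('a)"
    using s gauss1d[OF s] by simp
  also have "\<dots> = ennreal ((2 * pi * s) powr (real DIM('a) / 2))"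
  proof -
    have "sqrt (2 * pi * s) ^ DIM('a) = (2 * pi * s) powr (real DIM('a) / 2)"
      using s by (subst powr_half_sqrt[symmetric]) (auto simp: powr_realpow[symmetric] powr_powr)
    then show ?thesis using s by (subst ennreal_power) auto
  qed
  finally show ?thesis .
qed

lemma gauss_nd:
  fixes s :: real and x :: "'a::euclidean_space" assumes s: "s > 0"
  shows "(\<integral>\<^sup>+ y. ennreal (exp (- (norm (y - x))\<^sup>2 / (2 * s))) \<partial>lborel)
    = ennreal ((2 * pi * s) powr (real DIM('a) / 2))"
proof -
  have "(\<integral>\<^sup>+ y. ennreal (exp (- (norm (y - x))\<^sup>2 / (2 * s))) \<partial>lborel)
      = (\<integral>\<^sup>+ y. ennreal (exp (- (norm (y - x))\<^sup>2 / (2 * s))) \<partial>distr lborel borel ((+) x))"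
    by (simp add: lborel_distr_plus)
  also have "\<dots> = (\<integral>\<^sup>+ y. ennreal (exp (- (norm (y::'a))\<^sup>2 / (2 * s))) \<partial>lborel)"
    by (subst nn_integral_distr) (auto simp: algebra_simps)
  also have "\<dots> = ennreal ((2 * pi * s) powr (real DIM('a) / 2))"
    using gauss_nd0[OF s, where 'a='a] by simp
  finally show ?thesis .
qed

definition gd :: "'a::euclidean_space \<Rightarrow> real \<Rightarrow> 'a \<Rightarrow> real" where
  "gd x s y = (2 * pi * s) powr (- real DIM('a) / 2) * exp (- (norm (y - x))\<^sup>2 / (2 * s))"

lemma gd_nonneg: "s > 0 \<Longrightarrow> gd x s y \<ge> 0"
  by (simp add: gd_def)

lemma gd_meas[measurable]: "gd x s \<in> borel_measurable borel"
  unfolding gd_def by measurable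

lemma gauss_gd: "gauss x s = density lborel (\<lambda>y. ennreal (gd x s y))"
  by (simp add: gauss_def gd_def)

lemma nn_integral_gauss:
  assumes "F \<in> borel_measurable borel"
  shows "(\<integral>\<^sup>+ y. F y \<partial>gauss x s) = (\<integral>\<^sup>+ y. ennreal (gd x s y) * F y \<partial>lborel)"
  unfolding gauss_gd using assms by (subst nn_integral_density) auto

lemma prob_space_gauss:
  assumes s: "s > 0" shows "prob_space (gauss x s)"
proof
  have "emeasure (gauss x s) (space (gauss x s)) = (\<integral>\<^sup>+ y. ennreal (gd x s y) \<partial>lborel)"
    unfolding gauss_gd by (subst emeasure_density) auto
  also have "\<dots> = (\<integral>\<^sup>+ y. ennreal ((2 * pi * s) powr (- real DIM('a) / 2)) * ennreal (exp (- (norm (y - x))\<^sup>2 / (2 * s))) \<partial>lborel)"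
    unfolding gd_def by (simp add: ennreal_mult)
  also have "\<dots> = ennreal ((2 * pi * s) powr (- real DIM('a) / 2)) * ennreal ((2 * pi * s) powr (real DIM('a) / 2))"
    using gauss_nd[OF s, of x] by (subst nn_integral_cmult) auto
  also have "\<dots> = 1"
    using s by (simp add: ennreal_mult[symmetric] powr_add[symmetric])
  finally show "emeasure (gauss x s) (space (gauss x s)) = 1" .
qed

lemma sets_gauss[simp, measurable_cong]: "sets (gauss x s) = sets borel"
  by (simp add: gauss_def)

lemma space_gauss[simp]: "space (gauss x s) = UNIV"
  by (simp add: gauss_def)

definition V2 :: "real \<Rightarrow> 'a::euclidean_space itself \<Rightarrow> real" where
  "V2 s _ = (2 * pi * s) powr (- real DIM('a) / 2) * (4 * s) * (2 * pi * (2 * s)) powr (real DIM('a) / 2)"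

lemma moment2_nn:
  fixes x :: "'a::euclidean_space"
  assumes s: "s > 0"
  shows "(\<integral>\<^sup>+ y. ennreal ((norm (y - x))\<^sup>2) \<partial>gauss x s) \<le> ennreal (V2 s TYPE('a))"
proof -
  let ?c = "(2 * pi * s) powr (- real DIM('a) / 2)"
  have pt: "gd x s y * (norm (y - x))\<^sup>2 \<le> ?c * (4 * s) * exp (- (norm (y - x))\<^sup>2 / (2 * (2 * s)))" for y
  proof -
    let ?r = "(norm (y - x))\<^sup>2"
    have "?r / (4 * s) \<le> exp (?r / (4 * s))"
      using exp_ge_add_one_self[of "?r / (4 * s)"] by linarith
    then have "?r \<le> 4 * s * exp (?r / (4 * s))"
      using s by (simp add: field_simps)
    then have "exp (- ?r / (2 * s)) * ?r \<le> exp (- ?r / (2 * s)) * (4 * s * exp (?r / (4 * s)))"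
      by (intro mult_left_mono) auto
    also have "\<dots> = 4 * s * exp (- ?r / (2 * (2 * s)))"
    proof -
      have "exp (- ?r / (2 * s)) * exp (?r / (4 * s)) = exp (- ?r / (2 * (2 * s)))"
        using s by (simp add: exp_add[symmetric] field_simps)
      then show ?thesis by (simp add: algebra_simps)
    qed
    finally have "exp (- ?r / (2 * s)) * ?r \<le> 4 * s * exp (- ?r / (2 * (2 * s)))" .
    then have "?c * (exp (- ?r / (2 * s)) * ?r) \<le> ?c * (4 * s * exp (- ?r / (2 * (2 * s))))"
      by (intro mult_left_mono) auto
    then show ?thesis by (simp add: gd_def algebra_simps)
  qed
  have "(\<integral>\<^sup>+ y. ennreal ((norm (y - x))\<^sup>2) \<partial>gauss x s) = (\<integral>\<^sup>+ y. ennreal (gd x s y) * ennreal ((norm (y - x))\<^sup>2) \<partial>lborel)"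
    by (rule nn_integral_gauss) measurable
  also have "\<dots> \<le> (\<integral>\<^sup>+ y. ennreal (?c * (4 * s)) * ennreal (exp (- (norm (y - x))\<^sup>2 / (2 * (2 * s)))) \<partial>lborel)"
    apply (rule nn_integral_mono)
    using pt s by (simp add: ennreal_mult[symmetric] gd_nonneg)
  also have "\<dots> = ennreal (?c * (4 * s)) * ennreal ((2 * pi * (2 * s)) powr (real DIM('a) / 2))"
    using gauss_nd[of "2 * s" x] s by (subst nn_integral_cmult) auto
  also have "\<dots> = ennreal (V2 s TYPE('a))"
    using s by (simp add: V2_def ennreal_mult[symmetric])
  finally show ?thesis .
qed

lemma cball_lower:
  fixes x :: "'a::euclidean_space"
  assumes s: "s > 0"
  shows "emeasure (gauss x s) (cball x 1) \<ge> ennreal ((2 * pi * s) powr (- real DIM('a) / 2) * exp (- 1 / (2 * s)) * unit_ball_vol (real DIM('a)))"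
proof -
  let ?c = "(2 * pi * s) powr (- real DIM('a) / 2) * exp (- 1 / (2 * s))"
  have "ennreal (?c * unit_ball_vol (real DIM('a))) = ennreal ?c * emeasure lborel (cball x 1)"
    by (simp add: emeasure_cball ennreal_mult)
  also have "\<dots> = (\<integral>\<^sup>+ y. ennreal ?c * indicator (cball x 1) y \<partial>lborel)"
    by (subst nn_integral_cmult_indicator) auto
  also have "\<dots> \<le> (\<integral>\<^sup>+ y. ennreal (gd x s y) * indicator (cball x 1) y \<partial>lborel)"
  proof (rule nn_integral_mono)
    fix y :: 'a assume "y \<in> space lborel"
    show "ennreal ?c * indicator (cball x 1) y \<le> ennreal (gd x s y) * indicator (cball x 1) y"
    proof (cases "y \<in> cball x 1")
      case True
      then have "norm (y - x) \<le> 1" by (simp add: dist_norm norm_minus_commute)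
      then have "(norm (y - x))\<^sup>2 \<le> 1" by (simp add: power_le_one)
      then have "- 1 / (2 * s) \<le> - (norm (y - x))\<^sup>2 / (2 * s)"
        using s by (simp add: divide_right_mono)
      then have "?c \<le> gd x s y" unfolding gd_def
        by (intro mult_left_mono) auto
      with True show ?thesis by (simp add: ennreal_leI)
    qed simp
  qed
  also have "\<dots> = emeasure (gauss x s) (cball x 1)"
    unfolding gauss_gd by (subst emeasure_density) auto
  finally show ?thesis by simp
qed



context prob_space
begin

lemma comp_integrable:
  fixes F :: "'a \<Rightarrow> real"
  assumes "integrable M F" and iN: "i < (N::nat)"
  shows "integrable (PiM {..<N} (\<lambda>_. M)) (\<lambda>\<omega>. F (\<omega> i))"
    and "(\<integral>\<omega>. F (\<omega> i) \<partial>PiM {..<N} (\<lambda>_. M)) = integral\<^sup>L M F"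
proof -
  have F[measurable]: "F \<in> borel_measurable M" using assms(1) by auto
  have d: "distr (PiM {..<N} (\<lambda>_. M)) M (\<lambda>\<omega>. \<omega> i) = M"
    apply (rule distr_PiM_component)
    using iN prob_space_axioms by auto
  have m: "(\<lambda>\<omega>. \<omega> i) \<in> measurable (PiM {..<N} (\<lambda>_. M)) M"
    using iN by (intro measurable_component_singleton) auto
  show "integrable (PiM {..<N} (\<lambda>_. M)) (\<lambda>\<omega>. F (\<omega> i))"
    using integrable_distr_eq[OF m F] d assms(1) by simp
  show "(\<integral>\<omega>. F (\<omega> i) \<partial>PiM {..<N} (\<lambda>_. M)) = integral\<^sup>L M F"
    using integral_distr[OF m F] d by simp
qed

lemma prod_two:
  fixes a :: "nat \<Rightarrow> real"
  assumes "i < N" "j < N" "i \<noteq> j"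
  shows "(\<Prod>k\<in>{..<N}. (if k = i then a i else if k = j then a j else 1)) = a i * a j"
proof -
  have "(\<Prod>k\<in>{..<N}. (if k = i then a i else if k = j then a j else 1))
    = (if i = i then a i else if i = j then a j else 1) * (\<Prod>k\<in>{..<N} - {i}. (if k = i then a i else if k = j then a j else 1))"
    using assms by (subst prod.remove[of _ i]) auto
  also have "(\<Prod>k\<in>{..<N} - {i}. (if k = i then a i else if k = j then a j else 1))
    = (if j = i then a i else if j = j then a j else 1) * (\<Prod>k\<in>{..<N} - {i} - {j}. (if k = i then a i else if k = j then a j else 1))"
    using assms by (subst prod.remove[of _ j]) auto
  also have "(\<Prod>k\<in>{..<N} - {i} - {j}. (if k = i then a i else if k = j then a j else 1)) = 1"
    by (rule prod.neutral) auto
  finally show ?thesis using assms by simp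
qed

lemma cross:
  fixes g :: "'a \<Rightarrow> real"
  assumes g: "integrable M g" and g2: "integrable M (\<lambda>y. (g y)\<^sup>2)" and ij: "i < (N::nat)" "j < N"
  shows "integrable (PiM {..<N} (\<lambda>_. M)) (\<lambda>\<omega>. g (\<omega> i) * g (\<omega> j))
    \<and> (\<integral>\<omega>. g (\<omega> i) * g (\<omega> j) \<partial>PiM {..<N} (\<lambda>_. M)) = (if i = j then (\<integral>y. (g y)\<^sup>2 \<partial>M) else (integral\<^sup>L M g)\<^sup>2)"
proof (cases "i = j")
  case True
  then show ?thesis using comp_integrable[OF g2 ij(1)] by (simp add: power2_eq_square)
next
  case False
  have c1: "integral\<^sup>L M (\<lambda>_. 1::real) = 1" using prob_space.prob_space[OF prob_space_axioms] by simp
  have psf: "product_sigma_finite (\<lambda>_::nat. M)"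
    unfolding product_sigma_finite_def using prob_space_imp_sigma_finite prob_space_axioms by blast
  define f where "f k = (if k = i then g else if k = j then g else (\<lambda>_. 1::real))" for k
  have fi: "integrable M (f k)" for k unfolding f_def using g by auto
  have e1: "(\<Prod>k\<in>{..<N}. f k (\<omega> k)) = g (\<omega> i) * g (\<omega> j)" for \<omega>
  proof -
    have "(\<Prod>k\<in>{..<N}. f k (\<omega> k)) = (\<Prod>k\<in>{..<N}. (if k = i then (\<lambda>k. g (\<omega> k)) i else if k = j then (\<lambda>k. g (\<omega> k)) j else 1))"
      by (rule prod.cong) (auto simp: f_def)
    also have "\<dots> = g (\<omega> i) * g (\<omega> j)"
      by (rule prod_two[OF ij False])
    finally show ?thesis .
  qed
  have e2: "(\<Prod>k\<in>{..<N}. integral\<^sup>L M (f k)) = integral\<^sup>L M g * integral\<^sup>L M g"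
  proof -
    have "(\<Prod>k\<in>{..<N}. integral\<^sup>L M (f k)) = (\<Prod>k\<in>{..<N}. (if k = i then (\<lambda>k. integral\<^sup>L M g) i else if k = j then (\<lambda>k. integral\<^sup>L M g) j else 1))"
      by (rule prod.cong) (use prob_space.prob_space[OF prob_space_axioms] in \<open>auto simp: f_def\<close>)
    also have "\<dots> = integral\<^sup>L M g * integral\<^sup>L M g"
      by (rule prod_two[OF ij False])
    finally show ?thesis .
  qed
  have "integrable (PiM {..<N} (\<lambda>_. M)) (\<lambda>\<omega>. \<Prod>k\<in>{..<N}. f k (\<omega> k))"
    by (rule product_sigma_finite.product_integrable_prod[OF psf]) (auto simp: fi)
  moreover have "(\<integral>\<omega>. (\<Prod>k\<in>{..<N}. f k (\<omega> k)) \<partial>PiM {..<N} (\<lambda>_. M)) = (\<Prod>k\<in>{..<N}. integral\<^sup>L M (f k))"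
    by (rule product_sigma_finite.product_integral_prod[OF psf]) (auto simp: fi)
  ultimately show ?thesis using False e1 e2 by (simp add: power2_eq_square)
qed

lemma sum_sq:
  fixes g :: "'a \<Rightarrow> real"
  assumes g: "integrable M g" and g2: "integrable M (\<lambda>y. (g y)\<^sup>2)" and g0: "integral\<^sup>L M g = 0"
  shows "integrable (PiM {..<(N::nat)} (\<lambda>_. M)) (\<lambda>\<omega>. (\<Sum>i<N. g (\<omega> i))\<^sup>2)
    \<and> (\<integral>\<omega>. (\<Sum>i<N. g (\<omega> i))\<^sup>2 \<partial>PiM {..<N} (\<lambda>_. M)) = real N * (\<integral>y. (g y)\<^sup>2 \<partial>M)"
proof -
  have eq: "(\<Sum>i<N. g (\<omega> i))\<^sup>2 = (\<Sum>i<N. \<Sum>j<N. g (\<omega> i) * g (\<omega> j))" for \<omega> :: "nat \<Rightarrow> 'a"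
    by (simp add: power2_eq_square sum_product)
  have I: "integrable (PiM {..<N} (\<lambda>_. M)) (\<lambda>\<omega>. g (\<omega> i) * g (\<omega> j))" if "i < N" "j < N" for i j
    using cross[OF g g2 that] by blast
  have V: "(\<integral>\<omega>. g (\<omega> i) * g (\<omega> j) \<partial>PiM {..<N} (\<lambda>_. M)) = (if i = j then (\<integral>y. (g y)\<^sup>2 \<partial>M) else 0)"
    if "i < N" "j < N" for i j
    using cross[OF g g2 that] g0 by simp
  show ?thesis
    unfolding eq
  proof
    show "integrable (PiM {..<N} (\<lambda>_. M)) (\<lambda>\<omega>. \<Sum>i<N. \<Sum>j<N. g (\<omega> i) * g (\<omega> j))"
      by (intro Bochner_Integration.integrable_sum) (simp add: I)
    have "(\<integral>\<omega>. (\<Sum>i<N. \<Sum>j<N. g (\<omega> i) * g (\<omega> j)) \<partial>PiM {..<N} (\<lambda>_. M))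
      = (\<Sum>i<N. \<Sum>j<N. (\<integral>\<omega>. g (\<omega> i) * g (\<omega> j) \<partial>PiM {..<N} (\<lambda>_. M)))"
      using I by (subst Bochner_Integration.integral_sum) (auto intro!: sum.cong Bochner_Integration.integral_sum)
    also have "\<dots> = (\<Sum>i<N. \<Sum>j<N. (if i = j then (\<integral>y. (g y)\<^sup>2 \<partial>M) else 0))"
      using V by (auto intro!: sum.cong)
    also have "\<dots> = real N * (\<integral>y. (g y)\<^sup>2 \<partial>M)"
      by simp
    finally show "(\<integral>\<omega>. (\<Sum>i<N. \<Sum>j<N. g (\<omega> i) * g (\<omega> j)) \<partial>PiM {..<N} (\<lambda>_. M)) = real N * (\<integral>y. (g y)\<^sup>2 \<partial>M)" .
  qed
qed

lemma norm_sq_basis: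
  fixes v :: "'b::euclidean_space"
  shows "(norm v)\<^sup>2 = (\<Sum>b\<in>Basis. (v \<bullet> b)\<^sup>2)"
  unfolding power2_norm_eq_inner by (subst euclidean_inner) (simp add: power2_eq_square)

lemma vec_sq:
  fixes h :: "'a \<Rightarrow> 'b::euclidean_space"
  assumes h: "integrable M h" and h2: "integrable M (\<lambda>y. (norm (h y))\<^sup>2)" and h0: "integral\<^sup>L M h = 0"
  shows "(\<integral>\<^sup>+ \<omega>. ennreal ((norm (\<Sum>i<N. h (\<omega> i)))\<^sup>2) \<partial>PiM {..<(N::nat)} (\<lambda>_. M))
     = ennreal (real N * (\<integral>y. (norm (h y))\<^sup>2 \<partial>M))"
proof -
  have hm[measurable]: "h \<in> borel_measurable M" using h by auto
  have gb: "integrable M (\<lambda>y. h y \<bullet> b)" for b using h by auto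
  have gb2: "integrable M (\<lambda>y. (h y \<bullet> b)\<^sup>2)" if "b \<in> Basis" for b
  proof (rule Bochner_Integration.integrable_bound[OF h2])
    show "(\<lambda>y. (h y \<bullet> b)\<^sup>2) \<in> borel_measurable M" by measurable
    show "AE y in M. norm ((h y \<bullet> b)\<^sup>2) \<le> norm ((norm (h y))\<^sup>2)"
    proof (rule AE_I2)
      fix y
      have "\<bar>h y \<bullet> b\<bar> \<le> norm (h y)" using that by (rule Basis_le_norm)
      then have "\<bar>h y \<bullet> b\<bar>\<^sup>2 \<le> (norm (h y))\<^sup>2" by (intro power_mono) auto
      then have "(h y \<bullet> b)\<^sup>2 \<le> (norm (h y))\<^sup>2" by simp
      then show "norm ((h y \<bullet> b)\<^sup>2) \<le> norm ((norm (h y))\<^sup>2)" by simp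
    qed
  qed
  have gb0: "integral\<^sup>L M (\<lambda>y. h y \<bullet> b) = 0" for b using h h0 by simp
  have S: "integrable (PiM {..<N} (\<lambda>_. M)) (\<lambda>\<omega>. (\<Sum>i<N. h (\<omega> i) \<bullet> b)\<^sup>2)
    \<and> (\<integral>\<omega>. (\<Sum>i<N. h (\<omega> i) \<bullet> b)\<^sup>2 \<partial>PiM {..<N} (\<lambda>_. M)) = real N * (\<integral>y. (h y \<bullet> b)\<^sup>2 \<partial>M)"
    if "b \<in> Basis" for b
    using sum_sq[OF gb gb2[OF that] gb0] by simp
  have eqn: "(norm (\<Sum>i<N. h (\<omega> i)))\<^sup>2 = (\<Sum>b\<in>Basis. (\<Sum>i<N. h (\<omega> i) \<bullet> b)\<^sup>2)" for \<omega>
    by (simp add: norm_sq_basis inner_sum_left)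
  have int: "integrable (PiM {..<N} (\<lambda>_. M)) (\<lambda>\<omega>. (norm (\<Sum>i<N. h (\<omega> i)))\<^sup>2)"
    unfolding eqn using S by auto
  have "(\<integral>\<omega>. (norm (\<Sum>i<N. h (\<omega> i)))\<^sup>2 \<partial>PiM {..<N} (\<lambda>_. M))
     = (\<Sum>b\<in>Basis. (\<integral>\<omega>. (\<Sum>i<N. h (\<omega> i) \<bullet> b)\<^sup>2 \<partial>PiM {..<N} (\<lambda>_. M)))"
    unfolding eqn using S by (subst Bochner_Integration.integral_sum) auto
  also have "\<dots> = (\<Sum>b\<in>Basis. real N * (\<integral>y. (h y \<bullet> b)\<^sup>2 \<partial>M))"
    using S by (auto intro!: sum.cong)
  also have "\<dots> = real N * (\<integral>y. (norm (h y))\<^sup>2 \<partial>M)"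
    using gb2 by (simp add: norm_sq_basis sum_distrib_left[symmetric] Bochner_Integration.integral_sum)
  finally have "(\<integral>\<omega>. (norm (\<Sum>i<N. h (\<omega> i)))\<^sup>2 \<partial>PiM {..<N} (\<lambda>_. M)) = real N * (\<integral>y. (norm (h y))\<^sup>2 \<partial>M)" .
  then show ?thesis
    using int by (subst nn_integral_eq_integral) auto
qed

end



lemma le_1_sq: "(t::real) \<le> 1 + t\<^sup>2"
proof -
  have "0 \<le> (t - 1)\<^sup>2" by simp
  then have "t * 2 \<le> 1 + t * t" by (simp add: power2_eq_square algebra_simps)
  then have "t \<le> 1 + t * t" using zero_le_square[of t] by linarith
  then show ?thesis by (simp add: power2_eq_square)
qed

lemma sq_sum_le: "((a::real) + b)\<^sup>2 \<le> 2 * a\<^sup>2 + 2 * b\<^sup>2"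
proof -
  have e: "(a + b)\<^sup>2 = 2 * a\<^sup>2 + 2 * b\<^sup>2 - (a - b)\<^sup>2" by (simp add: power2_eq_square algebra_simps)
  have "0 \<le> (a - b)\<^sup>2" by (rule zero_le_power2)
  then show ?thesis unfolding e by linarith
qed

lemma point_bound:
  fixes f :: "'a::euclidean_space \<Rightarrow> real" and x :: 'a
  assumes lam: "lam > 0" and dl: "delta > 0"
    and fm[measurable]: "f \<in> borel_measurable borel"
    and wB: "\<And>y. exp (- f y / delta) \<le> B"
    and L: "L > 0" and ZL: "(\<integral>y. exp (- f y / delta) \<partial>gauss x (lam * delta)) \<ge> L"
    and eps: "eps > 0" and N: "N \<ge> 1"
  shows "(\<integral>\<^sup>+ y. ennreal ((norm (zprox_hat delta f N y - zprox delta lam f x))\<^sup>2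
                    * indicator (Omega_ev delta f N eps) y) \<partial>samples delta lam x N)
           \<le> ennreal ((B\<^sup>2 * (2 * V2 (lam * delta) TYPE('a) + 2 * (B * (1 + V2 (lam * delta) TYPE('a)) / L)\<^sup>2) / eps\<^sup>2) / real N)"
proof -
  define s where "s = lam * delta"
  have s: "s > 0" unfolding s_def using lam dl by simp
  define G where "G = gauss x s"
  interpret G: prob_space G unfolding G_def using prob_space_gauss[OF s] .
  define V where "V = V2 s TYPE('a)"
  define w where "w y = exp (- f y / delta)" for y
  have wm[measurable]: "w \<in> borel_measurable borel" unfolding w_def by measurable
  have w0: "w y > 0" for y unfolding w_def by simp
  have wB': "w y \<le> B" for y unfolding w_def using wB by simp
  have B0: "B > 0" using w0[of x] wB'[of x] by simp
  have mom: "(\<integral>\<^sup>+ y. ennreal ((norm (y - x))\<^sup>2) \<partial>G) \<le> ennreal V"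
    unfolding G_def V_def using moment2_nn[OF s] .
  have I2: "integrable G (\<lambda>y. (norm (y - x))\<^sup>2)"
  proof (rule integrableI_nonneg)
    show "(\<integral>\<^sup>+ y. ennreal ((norm (y - x))\<^sup>2) \<partial>G) < \<infinity>"
      using mom by (rule le_less_trans) simp
  qed (auto simp: G_def)
  have V2: "(\<integral>y. (norm (y - x))\<^sup>2 \<partial>G) \<le> V"
  proof -
    have "ennreal (\<integral>y. (norm (y - x))\<^sup>2 \<partial>G) \<le> ennreal V"
      using mom I2 by (subst nn_integral_eq_integral[symmetric]) auto
    moreover have "V \<ge> 0" unfolding V_def V2_def using s by simp
    ultimately show ?thesis by (simp add: ennreal_le_iff)
  qed
  have V0: "V \<ge> 0" unfolding V_def V2_def using s by simp
  have wabs: "\<bar>w y\<bar> \<le> B" for y by (metis abs_of_pos w0 wB')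
  have Iw: "integrable G w"
    by (rule G.integrable_const_bound[where B=B]) (use wabs in \<open>auto simp: G_def\<close>)
  have I1: "integrable G (\<lambda>y. norm (y - x))"
  proof (rule Bochner_Integration.integrable_bound[where f="\<lambda>y. 1 + (norm (y - x))\<^sup>2"])
    show "integrable G (\<lambda>y. 1 + (norm (y - x))\<^sup>2)" using I2 by simp
    show "(\<lambda>y. norm (y - x)) \<in> borel_measurable G" by (simp add: G_def)
    show "AE y in G. norm (norm (y - x)) \<le> norm (1 + (norm (y - x))\<^sup>2)"
    proof (rule AE_I2)
      fix y
      have "norm (y - x) \<le> 1 + (norm (y - x))\<^sup>2"
        by (rule le_1_sq)
      then show "norm (norm (y - x)) \<le> norm (1 + (norm (y - x))\<^sup>2)" by simp
    qed
  qed
  have Iwyx: "integrable G (\<lambda>y. w y *\<^sub>R (y - x))"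
  proof (rule Bochner_Integration.integrable_bound[where f="\<lambda>y. B * norm (y - x)"])
    show "integrable G (\<lambda>y. B * norm (y - x))" using I1 by simp
    show "(\<lambda>y. w y *\<^sub>R (y - x)) \<in> borel_measurable G" by (simp add: G_def)
    show "AE y in G. norm (w y *\<^sub>R (y - x)) \<le> norm (B * norm (y - x))"
      using wabs B0 by (intro AE_I2) (auto simp: abs_mult intro!: mult_right_mono)
  qed
  have Iwx: "integrable G (\<lambda>y. w y *\<^sub>R x)" using Iw by simp
  have Iwy: "integrable G (\<lambda>y. w y *\<^sub>R y)"
  proof -
    have "integrable G (\<lambda>y. w y *\<^sub>R (y - x) + w y *\<^sub>R x)" using Iwyx Iwx by simp
    then show ?thesis by (simp add: algebra_simps)
  qed
  define Z where "Z = (\<integral>y. w y \<partial>G)"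
  define A where "A = (\<integral>y. w y *\<^sub>R y \<partial>G)"
  define z where "z = A /\<^sub>R Z"
  have zdef: "zprox delta lam f x = z"
    unfolding zprox_def z_def A_def Z_def G_def s_def w_def by simp
  have ZL': "Z \<ge> L" using ZL unfolding Z_def G_def s_def w_def by simp
  have Z0: "Z > 0" using ZL' L by simp
  define h where "h y = w y *\<^sub>R (y - z)" for y
  have hm[measurable]: "h \<in> borel_measurable borel" unfolding h_def by measurable
  have Ih: "integrable G h"
  proof -
    have "integrable G (\<lambda>y. w y *\<^sub>R y - w y *\<^sub>R z)" using Iwy Iw by simp
    then show ?thesis unfolding h_def by (simp add: algebra_simps)
  qed
  have h0: "integral\<^sup>L G h = 0"
  proof -
    have "integral\<^sup>L G h = (\<integral>y. w y *\<^sub>R y - w y *\<^sub>R z \<partial>G)"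
      unfolding h_def by (simp add: algebra_simps)
    also have "\<dots> = A - Z *\<^sub>R z"
      using Iwy Iw unfolding A_def Z_def by simp
    also have "\<dots> = 0" unfolding z_def using Z0 by simp
    finally show ?thesis .
  qed
  have xz: "norm (z - x) \<le> B * (1 + V) / L"
  proof -
    have "z - x = (\<integral>y. w y *\<^sub>R (y - x) \<partial>G) /\<^sub>R Z"
    proof -
      have "(\<integral>y. w y *\<^sub>R (y - x) \<partial>G) = (\<integral>y. w y *\<^sub>R y - w y *\<^sub>R x \<partial>G)"
        by (simp add: algebra_simps)
      also have "\<dots> = A - Z *\<^sub>R x" using Iwy Iwx Iw unfolding A_def Z_def by simp
      finally have E: "(\<integral>y. w y *\<^sub>R (y - x) \<partial>G) = A - Z *\<^sub>R x" .
      have "(A - Z *\<^sub>R x) /\<^sub>R Z = A /\<^sub>R Z - x" using Z0 by (simp add: scaleR_diff_right)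
      then show ?thesis unfolding z_def E by simp
    qed
    then have "norm (z - x) = norm (\<integral>y. w y *\<^sub>R (y - x) \<partial>G) / Z" using Z0 by (simp add: divide_inverse mult.commute)
    also have "\<dots> \<le> (B * (1 + V)) / Z"
    proof (rule divide_right_mono)
      have "norm (\<integral>y. w y *\<^sub>R (y - x) \<partial>G) \<le> (\<integral>y. B * (1 + (norm (y - x))\<^sup>2) \<partial>G)"
      proof (rule Bochner_Integration.integral_norm_bound_integral)
        show "integrable G (\<lambda>y. w y *\<^sub>R (y - x))" by (rule Iwyx)
        show "integrable G (\<lambda>y. B * (1 + (norm (y - x))\<^sup>2))" using I2 by simp
        fix y
        have "norm (y - x) \<le> 1 + (norm (y - x))\<^sup>2"
          by (rule le_1_sq)
        then have "w y * norm (y - x) \<le> B * (1 + (norm (y - x))\<^sup>2)"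
          using w0[of y] wB'[of y] by (intro mult_mono) auto
        then show "norm (w y *\<^sub>R (y - x)) \<le> B * (1 + (norm (y - x))\<^sup>2)"
          using w0[of y] by simp
      qed
      also have "\<dots> = B * (1 + (\<integral>y. (norm (y - x))\<^sup>2 \<partial>G))"
        using I2 by (simp add: G.prob_space)
      also have "\<dots> \<le> B * (1 + V)" using V2 B0 by simp
      finally show "norm (\<integral>y. w y *\<^sub>R (y - x) \<partial>G) \<le> B * (1 + V)" .
    qed (use Z0 in simp)
    also have "\<dots> \<le> B * (1 + V) / L"
      using ZL' L B0 V0 by (intro divide_left_mono) auto
    finally show ?thesis .
  qed
  define C0 where "C0 = B\<^sup>2 * (2 * V + 2 * (B * (1 + V) / L)\<^sup>2)"
  have hb: "(norm (h y))\<^sup>2 \<le> B\<^sup>2 * (2 * (norm (y - x))\<^sup>2 + 2 * (norm (z - x))\<^sup>2)" for y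
  proof -
    have "norm (y - z) \<le> norm (y - x) + norm (z - x)"
      using norm_triangle_ineq4[of "y - x" "z - x"] by simp
    then have "(norm (y - z))\<^sup>2 \<le> (norm (y - x) + norm (z - x))\<^sup>2"
      by (intro power_mono) auto
    also have "\<dots> \<le> 2 * (norm (y - x))\<^sup>2 + 2 * (norm (z - x))\<^sup>2"
      by (rule sq_sum_le)
    finally have 1: "(norm (y - z))\<^sup>2 \<le> 2 * (norm (y - x))\<^sup>2 + 2 * (norm (z - x))\<^sup>2" .
    have "(norm (h y))\<^sup>2 = (w y)\<^sup>2 * (norm (y - z))\<^sup>2"
      unfolding h_def using w0[of y] by (simp add: power_mult_distrib)
    also have "\<dots> \<le> B\<^sup>2 * (2 * (norm (y - x))\<^sup>2 + 2 * (norm (z - x))\<^sup>2)"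
      using 1 w0[of y] wB'[of y] by (intro mult_mono power_mono) auto
    finally show ?thesis .
  qed
  have Ih2: "integrable G (\<lambda>y. (norm (h y))\<^sup>2)"
  proof (rule Bochner_Integration.integrable_bound[where f="\<lambda>y. B\<^sup>2 * (2 * (norm (y - x))\<^sup>2 + 2 * (norm (z - x))\<^sup>2)"])
    show "integrable G (\<lambda>y. B\<^sup>2 * (2 * (norm (y - x))\<^sup>2 + 2 * (norm (z - x))\<^sup>2))" using I2 by simp
    show "(\<lambda>y. (norm (h y))\<^sup>2) \<in> borel_measurable G" by (simp add: G_def)
    show "AE y in G. norm ((norm (h y))\<^sup>2) \<le> norm (B\<^sup>2 * (2 * (norm (y - x))\<^sup>2 + 2 * (norm (z - x))\<^sup>2))"
      using hb by (intro AE_I2) (auto intro: order_trans[OF _ abs_ge_self])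
  qed
  have Eh2: "(\<integral>y. (norm (h y))\<^sup>2 \<partial>G) \<le> C0"
  proof -
    have "(\<integral>y. (norm (h y))\<^sup>2 \<partial>G) \<le> (\<integral>y. B\<^sup>2 * (2 * (norm (y - x))\<^sup>2 + 2 * (norm (z - x))\<^sup>2) \<partial>G)"
      using Ih2 I2 hb by (intro integral_mono) auto
    also have "\<dots> = B\<^sup>2 * (2 * (\<integral>y. (norm (y - x))\<^sup>2 \<partial>G) + 2 * (norm (z - x))\<^sup>2)"
      using I2 by (simp add: G.prob_space)
    also have "\<dots> \<le> C0"
      unfolding C0_def
    proof (rule mult_left_mono[OF add_mono])
      show "2 * (\<integral>y. (norm (y - x))\<^sup>2 \<partial>G) \<le> 2 * V" using V2 by simp
      have "norm (z - x) \<le> B * (1 + V) / L" by (rule xz)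
      then show "2 * (norm (z - x))\<^sup>2 \<le> 2 * (B * (1 + V) / L)\<^sup>2"
        using norm_ge_zero[of "z - x"] by (simp add: power_mono)
    qed auto
    finally show ?thesis .
  qed
  define P where "P = samples delta lam x N"
  have PG: "P = PiM {..<N} (\<lambda>_. G)" unfolding P_def samples_def G_def s_def ..
  have vs: "(\<integral>\<^sup>+ \<omega>. ennreal ((norm (\<Sum>i<N. h (\<omega> i)))\<^sup>2) \<partial>P) = ennreal (real N * (\<integral>y. (norm (h y))\<^sup>2 \<partial>G))"
    unfolding PG by (rule G.vec_sq[OF Ih Ih2 h0])
  have hG[measurable]: "h \<in> borel_measurable G" by (simp add: G_def)
  have comp: "(\<lambda>\<omega>. h (\<omega> i)) \<in> borel_measurable P" if "i \<in> {..<N}" for i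
    unfolding PG by (rule measurable_compose[OF measurable_component_singleton[OF that] hG])
  have summ: "(\<lambda>\<omega>. \<Sum>i<N. h (\<omega> i)) \<in> borel_measurable P"
    using comp by (rule borel_measurable_sum)
  have mP: "(\<lambda>\<omega>. ennreal ((norm (\<Sum>i<N. h (\<omega> i)))\<^sup>2)) \<in> borel_measurable P"
    using summ by measurable
  define NE where "NE = real N * eps"
  have NE: "NE > 0" unfolding NE_def using N eps by simp
  have pw: "ennreal ((norm (zprox_hat delta f N \<omega> - z))\<^sup>2 * indicator (Omega_ev delta f N eps) \<omega>)
      \<le> ennreal ((norm (\<Sum>i<N. h (\<omega> i)))\<^sup>2) * ennreal ((1 / NE)\<^sup>2)" for \<omega>
  proof (cases "\<omega> \<in> Omega_ev delta f N eps")
    case False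
    then show ?thesis by simp
  next
    case True
    define S where "S = (\<Sum>i<N. w (\<omega> i))"
    have "(1 / real N) * S \<ge> eps" using True unfolding Omega_ev_def S_def w_def by simp
    then have SNE: "S \<ge> NE" unfolding NE_def using N by (simp add: field_simps)
    then have S0: "S > 0" using NE by simp
    have zh: "zprox_hat delta f N \<omega> = (\<Sum>i<N. w (\<omega> i) *\<^sub>R \<omega> i) /\<^sub>R S"
      unfolding zprox_hat_def S_def w_def ..
    have sh: "(\<Sum>i<N. h (\<omega> i)) = (\<Sum>i<N. w (\<omega> i) *\<^sub>R \<omega> i) - S *\<^sub>R z"
      unfolding h_def S_def by (simp add: scaleR_diff_right sum_subtractf scaleR_sum_left)
    have d: "zprox_hat delta f N \<omega> - z = (\<Sum>i<N. h (\<omega> i)) /\<^sub>R S"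
      unfolding zh sh using S0 by (simp add: scaleR_diff_right)
    have "(norm (zprox_hat delta f N \<omega> - z))\<^sup>2 = (norm (\<Sum>i<N. h (\<omega> i)))\<^sup>2 / S\<^sup>2"
      unfolding d using S0 by (simp add: power_divide divide_inverse power_mult_distrib mult.commute power_inverse)
    also have "\<dots> \<le> (norm (\<Sum>i<N. h (\<omega> i)))\<^sup>2 / NE\<^sup>2"
      using SNE NE by (intro divide_left_mono power_mono mult_pos_pos) auto
    also have "\<dots> = (norm (\<Sum>i<N. h (\<omega> i)))\<^sup>2 * (1 / NE)\<^sup>2"
      by (simp add: power_divide)
    finally show ?thesis using True by (simp add: ennreal_mult[symmetric] ennreal_leI)
  qed
  have "(\<integral>\<^sup>+ y. ennreal ((norm (zprox_hat delta f N y - zprox delta lam f x))\<^sup>2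
                    * indicator (Omega_ev delta f N eps) y) \<partial>samples delta lam x N)
      \<le> (\<integral>\<^sup>+ \<omega>. ennreal ((norm (\<Sum>i<N. h (\<omega> i)))\<^sup>2) * ennreal ((1 / NE)\<^sup>2) \<partial>P)"
    unfolding zdef P_def[symmetric] by (rule nn_integral_mono) (rule pw)
  also have "\<dots> = ennreal (real N * (\<integral>y. (norm (h y))\<^sup>2 \<partial>G)) * ennreal ((1 / NE)\<^sup>2)"
    using mP vs by (simp add: nn_integral_multc)
  also have "\<dots> = ennreal ((\<integral>y. (norm (h y))\<^sup>2 \<partial>G) / eps\<^sup>2 / real N)"
  proof -
    have "real N * (\<integral>y. (norm (h y))\<^sup>2 \<partial>G) * (1 / NE)\<^sup>2 = (\<integral>y. (norm (h y))\<^sup>2 \<partial>G) / eps\<^sup>2 / real N"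
      unfolding NE_def using N eps by (simp add: field_simps power2_eq_square)
    moreover have "real N * (\<integral>y. (norm (h y))\<^sup>2 \<partial>G) \<ge> 0"
      by (simp add: integral_nonneg_AE)
    ultimately show ?thesis by (simp add: ennreal_mult[symmetric])
  qed
  also have "\<dots> \<le> ennreal (C0 / eps\<^sup>2 / real N)"
    using Eh2 N eps by (intro ennreal_leI divide_right_mono) auto
  finally show ?thesis unfolding C0_def V_def s_def .
qed



theorem lemma3:
  fixes f :: "'a::euclidean_space \<Rightarrow> real"
    and lam delta :: real and K :: "'a set" and eps :: real
  assumes "lam > 0" and "delta > 0"
    and "continuous_on UNIV f" and "\<exists>m. \<forall>y. m \<le> f y"
    and "compact K" and "eps > 0"
  shows "\<exists>C>0. \<forall>x\<in>K. \<forall>N::nat. N \<ge> 1 \<longrightarrow>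
           (\<integral>\<^sup>+ y. ennreal ((norm (zprox_hat delta f N y - zprox delta lam f x))\<^sup>2
                    * indicator (Omega_ev delta f N eps) y) \<partial>samples delta lam x N)
           \<le> ennreal (C / real N)"
proof -
  note lam = assms(1) and dl = assms(2) and fc = assms(3) and K = assms(5) and eps = assms(6)
  define s where "s = lam * delta"
  have s: "s > 0" unfolding s_def using lam dl by simp
  obtain m where m: "\<And>y. m \<le> f y" using assms(4) by blast
  define B where "B = exp (- m / delta)"
  have wB: "exp (- f y / delta) \<le> B" for y
    unfolding B_def using m[of y] dl by (simp add: divide_right_mono)
  have fm: "f \<in> borel_measurable borel" using fc by (rule borel_measurable_continuous_onI)
  obtain R where R: "\<And>x. x \<in> K \<Longrightarrow> norm x \<le> R"
    using compact_imp_bounded[OF K] by (auto simp: bounded_iff)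
  have "compact (f ` cball 0 (R + 1))"
    by (rule compact_continuous_image) (auto intro: continuous_on_subset[OF fc])
  then obtain Mx where Mx: "\<And>y. y \<in> cball 0 (R + 1) \<Longrightarrow> \<bar>f y\<bar> \<le> Mx"
    using compact_imp_bounded by (fastforce simp: bounded_iff)
  define wl where "wl = exp (- Mx / delta)"
  have wl0: "wl > 0" unfolding wl_def by simp
  define c0 where "c0 = (2 * pi * s) powr (- real DIM('a) / 2) * exp (- 1 / (2 * s)) * unit_ball_vol (real DIM('a))"
  have c0: "c0 > 0" unfolding c0_def using s by simp
  define L where "L = wl * c0"
  have L: "L > 0" unfolding L_def using wl0 c0 by simp
  have ZL: "(\<integral>y. exp (- f y / delta) \<partial>gauss x (lam * delta)) \<ge> L" if x: "x \<in> K" for x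
  proof -
    define G where "G = gauss x s"
    interpret G: prob_space G unfolding G_def using prob_space_gauss[OF s] .
    have low: "wl * indicator (cball x 1) y \<le> exp (- f y / delta)" for y
    proof (cases "y \<in> cball x 1")
      case True
      then have "norm y \<le> R + 1"
        using R[OF x] norm_triangle_ineq2[of y x] by (auto simp: dist_norm norm_minus_commute)
      then have "f y \<le> Mx" using Mx[of y] by auto
      then have "- Mx / delta \<le> - f y / delta" using dl by (simp add: divide_right_mono)
      then show ?thesis using True unfolding wl_def by simp
    qed simp
    have mG: "(\<lambda>y. exp (- f y / delta)) \<in> borel_measurable G"
      using fm by (simp add: G_def)
    have I1: "integrable G (\<lambda>y. exp (- f y / delta))"
      by (rule G.integrable_const_bound[where B=B]) (use wB mG in auto)
    have I2: "integrable G (\<lambda>y. wl * indicator (cball x 1) y)"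
      by (rule G.integrable_const_bound[where B=wl]) (use wl0 in \<open>auto simp: G_def indicator_def\<close>)
    have "c0 \<le> measure G (cball x 1)"
    proof -
      have "ennreal c0 \<le> emeasure G (cball x 1)"
        unfolding G_def c0_def by (rule cball_lower[OF s])
      then show ?thesis by (simp add: G.emeasure_eq_measure ennreal_le_iff)
    qed
    then have "L \<le> (\<integral>y. wl * indicator (cball x 1) y \<partial>G)"
      unfolding L_def using wl0 by (simp add: G_def)
    also have "\<dots> \<le> (\<integral>y. exp (- f y / delta) \<partial>G)"
      using I1 I2 low by (intro integral_mono) auto
    finally show ?thesis unfolding G_def s_def .
  qed
  define V where "V = V2 (lam * delta) TYPE('a)"
  define C where "C = (B\<^sup>2 * (2 * V + 2 * (B * (1 + V) / L)\<^sup>2) / eps\<^sup>2) + 1"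
  have C0: "B\<^sup>2 * (2 * V + 2 * (B * (1 + V) / L)\<^sup>2) / eps\<^sup>2 \<ge> 0"
    unfolding V_def V2_def using lam dl by simp
  show ?thesis
  proof (intro exI[of _ C] conjI ballI allI impI)
    show "C > 0" unfolding C_def using C0 by simp
    fix x N assume x: "x \<in> K" and N: "(N::nat) \<ge> 1"
    have "(\<integral>\<^sup>+ y. ennreal ((norm (zprox_hat delta f N y - zprox delta lam f x))\<^sup>2
                    * indicator (Omega_ev delta f N eps) y) \<partial>samples delta lam x N)
       \<le> ennreal ((B\<^sup>2 * (2 * V + 2 * (B * (1 + V) / L)\<^sup>2) / eps\<^sup>2) / real N)"
      unfolding V_def by (rule point_bound[OF lam dl fm wB L ZL[OF x] eps N])
    also have "\<dots> \<le> ennreal (C / real N)"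
      unfolding C_def using N by (intro ennreal_leI divide_right_mono) auto
    finally show "(\<integral>\<^sup>+ y. ennreal ((norm (zprox_hat delta f N y - zprox delta lam f x))\<^sup>2
                    * indicator (Omega_ev delta f N eps) y) \<partial>samples delta lam x N)
       \<le> ennreal (C / real N)" .
  qed
qed

end
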